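(* Let $S=S_1S_2\cdots$ be as defined in the context. For almost every $n$ (all sufficiently large $n$), when $\mathrm{PPM}^*$ encodes $S$ sequentially, the bad zone of $S_n$, i.e. its first $2^n+2n$ bits, contributes in total at most $(2^n+2n)\log(n^5)$ bits to the encoding of $S$.
   Context: Strings are indexed from $0$; $x[i..j]$ is the substring from position $i$ to $j$; $x^j$ is $j$-fold concatenation; $\log$ is base $2$. de Bruijn strings: for $n\ge1$, a de Bruijn string of order $n$ is a binary string $x$ of length $2^n$ such that every $w\in\{0,1\}^n$ occurs exactly once as a substring of $x\cdot x[0..n-2]$. $db(n)$ is the lexicographically least one, produced by Martin's algorithm: start with $x=1^{n-1}$; while possible, append a bit (preferring $0$ over $1$) so that all length-$n$ substrings of $x$ remain distinct; then delete the prefix $1^{n-1}$. For $0\le i<2^n$, $db_i(n)=db(n)[i..2^n-1]\cdot db(n)[0..i-1]$. The sequence $S$: for $n\ge1$ write $n=2^st$ with $t$ odd, let $B_{n,i}=db_i(n)^t$ for $0\le i<2^s$, $S_n=B_{n,0}B_{n,1}\cdots B_{n,2^s-1}$, and $S=S_1S_2\cdots$. The $\mathrm{PPM}^*$ compressor (without exclusion, escape Method C) on binary input: after reading a prefix $x$, each stored context $c$ has, for each bit $b$, a frequency count equal to the number of occurrences of $cb$ in $x$, and an escape count equal to the number of distinct bits that have followed $c$ in $x$; deterministic means escape count $1$. The stored contexts are the empty context and, whenever a string $w$ occurs at least twice in $x$, the contexts $wb$ for each bit $b$ such that $wb$ occurs in $x$ followed by a further bit. Relevant contexts are stored contexts that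 are suffixes of $x$; the current context is the shortest deterministic relevant one, or the longest relevant one if none is deterministic. If the next bit $b$ has count $f>0$ in the current context it is encoded with probability $f/(T+e)$ ($T$ total bit count, $e$ escape count); otherwise an escape is encoded with probability $e/(T+e)$ and the next shorter relevant context becomes current; if $b$ is unseen even in the empty context, after the escape it is encoded with probability $1/2$. The model is then updated. The number of bits contributed by an encoded bit is $-\log$ of the product of the probabilities (escapes and symbol) used to encode it. *)

theory Defs
  imports Complex_Main "HOL-Computational_Algebra.Primes"
begin

text \<open>Binary strings are bool lists; False is the bit 0, True is the bit 1.\<close>

definition subwords :: "nat \<Rightarrow> bool list \<Rightarrow> bool list list" where
  "subwords n x = map (\<lambda>i. take n (drop i x)) [0..<Suc (length x) - n]"

definition martin_step :: "nat \<Rightarrow> bool list \<Rightarrow> bool list" where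
  "martin_step n x =
     (if distinct (subwords n (x @ [False])) then x @ [False]
      else if distinct (subwords n (x @ [True])) then x @ [True]
      else x)"

text \<open>At most 2^n bits can ever be appended (there are only 2^n words of length n),
  so 2^n iterations of the step reach the point where no bit can be appended.\<close>
definition db :: "nat \<Rightarrow> bool list" where
  "db n = drop (n - 1) ((martin_step n ^^ (2 ^ n)) (replicate (n - 1) True))"

definition db_rot :: "nat \<Rightarrow> nat \<Rightarrow> bool list" where
  "db_rot n i = drop i (db n) @ take i (db n)"

definition two_exp :: "nat \<Rightarrow> nat" where
  "two_exp n = multiplicity (2::nat) n"

definition odd_part :: "nat \<Rightarrow> nat" where
  "odd_part n = n div 2 ^ two_exp n"

definition Bblock :: "nat \<Rightarrow> nat \<Rightarrow> bool list" where
  "Bblock n i = concat (replicate (odd_part n) (db_rot n i))"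

definition Sblock :: "nat \<Rightarrow> bool list" where
  "Sblock n = concat (map (Bblock n) [0..<2 ^ two_exp n])"

text \<open>Position (0-based) in S at which S_n starts.\<close>
definition Soff :: "nat \<Rightarrow> nat" where
  "Soff n = length (concat (map Sblock [1..<n]))"

text \<open>The infinite sequence S = S_1 S_2 ...; bit k lies within S_1 ... S_(k+1).\<close>
definition Sseq :: "nat \<Rightarrow> bool" where
  "Sseq k = concat (map Sblock [1..<k + 2]) ! k"

section \<open>PPM* (no exclusion, escape method C) on binary input\<close>

definition occ :: "bool list \<Rightarrow> bool list \<Rightarrow> nat" where
  "occ x w = card {i. i + length w \<le> length x \<and> take (length w) (drop i x) = w}"

definition freq :: "bool list \<Rightarrow> bool list \<Rightarrow> bool \<Rightarrow> nat" where
  "freq x c b = occ x (c @ [b])"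

definition esc :: "bool list \<Rightarrow> bool list \<Rightarrow> nat" where
  "esc x c = card {b. occ x (c @ [b]) > 0}"

definition deterministic :: "bool list \<Rightarrow> bool list \<Rightarrow> bool" where
  "deterministic x c \<longleftrightarrow> esc x c = 1"

definition stored :: "bool list \<Rightarrow> bool list \<Rightarrow> bool" where
  "stored x c \<longleftrightarrow> c = [] \<or>
     (\<exists>w b. c = w @ [b] \<and> occ x w \<ge> 2 \<and> (\<exists>b'. occ x (c @ [b']) > 0))"

definition suffix_of_len :: "bool list \<Rightarrow> nat \<Rightarrow> bool list" where
  "suffix_of_len x l = drop (length x - l) x"

definition relevant_lens :: "bool list \<Rightarrow> nat list" where
  "relevant_lens x = filter (\<lambda>l. stored x (suffix_of_len x l)) [0..<Suc (length x)]"

definition current_len :: "bool list \<Rightarrow> nat" where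
  "current_len x =
     (let R = set (relevant_lens x);
          D = {l \<in> R. deterministic x (suffix_of_len x l)}
      in if D \<noteq> {} then Min D else Max R)"

definition ctx_chain :: "bool list \<Rightarrow> bool list list" where
  "ctx_chain x = map (suffix_of_len x)
     (rev (filter (\<lambda>l. l \<le> current_len x) (relevant_lens x)))"

fun enc_prob :: "bool list \<Rightarrow> bool \<Rightarrow> bool list list \<Rightarrow> real" where
  "enc_prob x b [] = 1 / 2"
| "enc_prob x b (c # cs) =
     (let f = real (freq x c b);
          T = real (freq x c False + freq x c True);
          e = real (esc x c)
      in if f > 0 then f / (T + e) else (e / (T + e)) * enc_prob x b cs)"

definition ppm_cost :: "bool list \<Rightarrow> bool \<Rightarrow> real" where
  "ppm_cost x b = - log 2 (enc_prob x b (ctx_chain x))"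

end

theory Submission
  imports Defs "HOL-Real_Asymp.Real_Asymp"
begin


lemma take_drop_append_le:
  "q + k \<le> length x \<Longrightarrow> take k (drop q (x @ y)) = take k (drop q x)"
  by simp

lemma length_subwords: "length (subwords m x) = Suc (length x) - m"
  by (simp add: subwords_def)

lemma subwords_nth: "i < Suc (length x) - m \<Longrightarrow> subwords m x ! i = take m (drop i x)"
  by (simp add: subwords_def)

lemma set_subwords: "set (subwords m x) = {take m (drop i x) | i. i < Suc (length x) - m}"
  by (auto simp: subwords_def)

lemma subwords_snoc:
  assumes "length x \<ge> m - 1" "m \<ge> 1"
  shows "subwords m (x @ [b]) = subwords m x @ [drop (length x - (m - 1)) x @ [b]]"
proof -
  have e: "Suc (length (x @ [b])) - m = Suc (Suc (length x) - m)" using assms by auto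
  have "subwords m (x @ [b]) = map (\<lambda>i. take m (drop i (x @ [b]))) [0..<Suc (Suc (length x) - m)]"
    unfolding subwords_def e ..
  also have "\<dots> = map (\<lambda>i. take m (drop i (x @ [b]))) [0..<Suc (length x) - m] @
       [take m (drop (Suc (length x) - m) (x @ [b]))]" by simp
  also have "map (\<lambda>i. take m (drop i (x @ [b]))) [0..<Suc (length x) - m] = subwords m x"
    unfolding subwords_def by (rule map_cong) auto
  also have "take m (drop (Suc (length x) - m) (x @ [b])) = drop (length x - (m - 1)) x @ [b]"
    using assms by auto
  finally show ?thesis .
qed

lemma distinct_snoc_mem:
  assumes "distinct xs" "\<not> distinct (xs @ [z])" shows "z \<in> set xs"
  using assms by auto

definition greedy :: "nat \<Rightarrow> bool list \<Rightarrow> bool" where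
  "greedy m x \<longleftrightarrow> (\<forall>i. m - 1 \<le> i \<and> i < length x \<and> x ! i \<longrightarrow>
      (\<exists>q. q + m \<le> i \<and> take m (drop q x) = take (m - 1) (drop (i - (m - 1)) x) @ [False]))"

definition minv :: "nat \<Rightarrow> bool list \<Rightarrow> bool" where
  "minv m x \<longleftrightarrow> (\<exists>y. x = replicate (m - 1) True @ y) \<and> distinct (subwords m x) \<and> greedy m x"

lemma martin_step_cases:
  "martin_step m x = x \<or>
   (martin_step m x = x @ [False] \<and> distinct (subwords m (x @ [False]))) \<or>
   (martin_step m x = x @ [True] \<and> distinct (subwords m (x @ [True])) \<and>
      \<not> distinct (subwords m (x @ [False])))"
  unfolding martin_step_def by auto

lemma minv_len: "minv m x \<Longrightarrow> length x \<ge> m - 1"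
  unfolding minv_def by auto

lemma minv_step:
  assumes m: "m \<ge> 1" and I: "minv m x"
  shows "minv m (martin_step m x)"
proof -
  have lx: "length x \<ge> m - 1" using minv_len[OF I] .
  have dx: "distinct (subwords m x)" using I unfolding minv_def by auto
  have gx: "greedy m x" using I unfolding minv_def by auto
  obtain y where xy: "x = replicate (m - 1) True @ y" using I unfolding minv_def by auto
  have old: "greedy m (x @ [b])" if nb: "b \<Longrightarrow> \<not> distinct (subwords m (x @ [False]))" for b
    unfolding greedy_def
  proof (intro allI impI)
    fix i assume h: "m - 1 \<le> i \<and> i < length (x @ [b]) \<and> (x @ [b]) ! i"
    show "\<exists>q. q + m \<le> i \<and> take m (drop q (x @ [b])) = take (m - 1) (drop (i - (m - 1)) (x @ [b])) @ [False]"
    proof (cases "i < length x")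
      case True
      then have "x ! i" using h by (simp add: nth_append)
      with gx True h obtain q where q: "q + m \<le> i" "take m (drop q x) = take (m - 1) (drop (i - (m - 1)) x) @ [False]"
        unfolding greedy_def by blast
      have "take m (drop q (x @ [b])) = take m (drop q x)" using q(1) True by simp
      moreover have "take (m - 1) (drop (i - (m - 1)) (x @ [b])) = take (m - 1) (drop (i - (m - 1)) x)"
        using True h by (intro take_drop_append_le) auto
      ultimately show ?thesis using q by auto
    next
      case False
      then have i: "i = length x" using h by auto
      then have b: b using h by simp
      have "\<not> distinct (subwords m x @ [drop (length x - (m - 1)) x @ [False]])"
        using nb[OF b] subwords_snoc[OF lx m] by simp
      then have "drop (length x - (m - 1)) x @ [False] \<in> set (subwords m x)" using dx by auto
      then obtain q where q: "q < Suc (length x) - m" "take m (drop q x) = drop (length x - (m - 1)) x @ [False]"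
        unfolding set_subwords by auto
      have "take m (drop q (x @ [b])) = take m (drop q x)" using q(1) m by simp
      moreover have "take (m - 1) (drop (i - (m - 1)) (x @ [b])) = drop (length x - (m - 1)) x"
        using i lx by simp
      ultimately show ?thesis using q m i by (intro exI[of _ q]) auto
    qed
  qed
  from martin_step_cases[of m x] show ?thesis
  proof (elim disjE conjE)
    assume "martin_step m x = x" then show ?thesis using I by simp
  next
    assume a: "martin_step m x = x @ [False]" "distinct (subwords m (x @ [False]))"
    show ?thesis unfolding a(1) minv_def using a(2) old[of False] xy by auto
  next
    assume a: "martin_step m x = x @ [True]" "distinct (subwords m (x @ [True]))"
      "\<not> distinct (subwords m (x @ [False]))"
    show ?thesis unfolding a(1) minv_def using a(2,3) old[of True] xy by auto
  qed
qed

lemma card_bool_lists: "card {z :: bool list. length z = k} = 2 ^ k"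
proof -
  have "card {z :: bool list. set z \<subseteq> UNIV \<and> length z = k} = card (UNIV :: bool set) ^ k"
    by (rule card_lists_length_eq) simp
  then show ?thesis by simp
qed

lemma finite_bool_lists: "finite {z :: bool list. length z = k}"
  using card_bool_lists[of k] by (metis card.infinite power_not_zero zero_neq_numeral)

lemma set_subwords_len: "set (subwords m x) \<subseteq> {z. length z = m}"
  unfolding set_subwords by auto

lemma distinct_subwords_bound:
  assumes "distinct (subwords m x)" shows "length (subwords m x) \<le> 2 ^ m"
proof -
  have "length (subwords m x) = card (set (subwords m x))" using assms distinct_card by metis
  also have "\<dots> \<le> card {z :: bool list. length z = m}"
    by (rule card_mono[OF finite_bool_lists set_subwords_len])
  finally show ?thesis by (simp add: card_bool_lists)
qed


definition mx :: "nat \<Rightarrow> nat \<Rightarrow> bool list" where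
  "mx m k = (martin_step m ^^ k) (replicate (m - 1) True)"

lemma minv_mx: "m \<ge> 1 \<Longrightarrow> minv m (mx m k)"
proof (induction k)
  case 0
  have "subwords m (replicate (m - 1) True) = []" unfolding subwords_def using 0 by simp
  then show ?case using 0 unfolding mx_def minv_def greedy_def by auto
next
  case (Suc k)
  then show ?case unfolding mx_def using minv_step by simp
qed

lemma mx_len: "m \<ge> 1 \<Longrightarrow> martin_step m (mx m k) = mx m k \<or> length (mx m k) = m - 1 + k"
proof (induction k)
  case 0 then show ?case unfolding mx_def by simp
next
  case (Suc k)
  have s: "mx m (Suc k) = martin_step m (mx m k)" unfolding mx_def by simp
  from Suc consider (a) "martin_step m (mx m k) = mx m k" | (b) "length (mx m k) = m - 1 + k" by blast
  then show ?case
  proof cases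
    case a then show ?thesis unfolding s by simp
  next
    case b
    from martin_step_cases[of m "mx m k"] show ?thesis unfolding s using b by auto
  qed
qed

definition MX :: "nat \<Rightarrow> bool list" where "MX m = mx m (2 ^ m)"

lemma MX_stuck: assumes m: "m \<ge> 1" shows "martin_step m (MX m) = MX m"
proof -
  have I: "minv m (MX m)" unfolding MX_def using minv_mx[OF m] .
  from mx_len[OF m, of "2 ^ m"] show ?thesis unfolding MX_def[symmetric]
  proof
    assume L: "length (MX m) = m - 1 + 2 ^ m"
    show ?thesis
    proof (rule ccontr)
      assume ne: "martin_step m (MX m) \<noteq> MX m"
      then obtain b where b: "martin_step m (MX m) = MX m @ [b]" using martin_step_cases[of m "MX m"] by auto
      have "minv m (MX m @ [b])" using minv_step[OF m I] b by simp
      then have "length (subwords m (MX m @ [b])) \<le> 2 ^ m"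
        using distinct_subwords_bound unfolding minv_def by blast
      then show False using L m by (simp add: length_subwords)
    qed
  qed
qed

lemma MX_minv: "m \<ge> 1 \<Longrightarrow> minv m (MX m)"
  unfolding MX_def using minv_mx .

lemma MX_both:
  assumes m: "m \<ge> 1"
  shows "drop (length (MX m) - (m - 1)) (MX m) @ [b] \<in> set (subwords m (MX m))"
proof -
  let ?X = "MX m"
  have I: "minv m ?X" using MX_minv[OF m] .
  have lx: "length ?X \<ge> m - 1" using minv_len[OF I] .
  have dx: "distinct (subwords m ?X)" using I unfolding minv_def by auto
  have nd: "\<not> distinct (subwords m (?X @ [b]))"
    using MX_stuck[OF m] unfolding martin_step_def by (cases b; auto split: if_splits)
  then show ?thesis using subwords_snoc[OF lx m] dx by auto
qed


context
  fixes m :: nat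
  assumes m: "m \<ge> 1"
begin

abbreviation "X \<equiv> MX m"
abbreviation "W \<equiv> set (subwords m (MX m))"
definition ow :: "nat \<Rightarrow> bool list" where "ow i = take (m - 1) (drop i X)"

lemma X_len: "length X \<ge> m - 1" using minv_len[OF MX_minv[OF m]] .
lemma X_dist: "distinct (subwords m X)" using MX_minv[OF m] unfolding minv_def by auto
lemma X_greedy: "greedy m X" using MX_minv[OF m] unfolding minv_def by auto
lemma X_pre: "\<exists>y. X = replicate (m - 1) True @ y" using MX_minv[OF m] unfolding minv_def by auto

lemma win_split1: "i + m \<le> length X \<Longrightarrow> take m (drop i X) = ow i @ [X ! (i + (m - 1))]"
proof -
  assume h: "i + m \<le> length X"
  have "take (Suc (m - 1)) (drop i X) = take (m - 1) (drop i X) @ [drop i X ! (m - 1)]"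
    using h m by (intro take_Suc_conv_app_nth) auto
  then show ?thesis using m h unfolding ow_def by simp
qed

lemma win_split2: "i + m \<le> length X \<Longrightarrow> take m (drop i X) = X ! i # ow (Suc i)"
proof -
  assume h: "i + m \<le> length X"
  have "drop i X = X ! i # drop (Suc i) X" using h m Cons_nth_drop_Suc[of i X] by auto
  then have "take (Suc (m - 1)) (drop i X) = X ! i # take (m - 1) (drop (Suc i) X)" by simp
  then show ?thesis using m unfolding ow_def by simp
qed

lemma memW: "z \<in> W \<longleftrightarrow> (\<exists>i. i + m \<le> length X \<and> take m (drop i X) = z)"
proof -
  have e: "(i < Suc (length X) - m) = (i + m \<le> length X)" for i using m by auto
  show ?thesis unfolding set_subwords e by auto
qed

lemma injW: "i + m \<le> length X \<Longrightarrow> i' + m \<le> length X \<Longrightarrow> take m (drop i X) = take m (drop i' X) \<Longrightarrow> i = i'"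
proof -
  assume a: "i + m \<le> length X" "i' + m \<le> length X" "take m (drop i X) = take m (drop i' X)"
  have l: "i < length (subwords m X)" "i' < length (subwords m X)" using a m by (auto simp: length_subwords)
  have "subwords m X ! i = subwords m X ! i'" using a l by (simp add: subwords_nth length_subwords)
  then show "i = i'" using nth_eq_iff_index_eq[OF X_dist l] by simp
qed

definition Aset :: "bool list \<Rightarrow> nat set" where "Aset v = {i. i + (m - 1) \<le> length X \<and> ow i = v}"

lemma finite_Aset: "finite (Aset v)"
  by (rule finite_subset[of _ "{..length X}"]) (auto simp: Aset_def)

lemma out_eq: "card {b. v @ [b] \<in> W} = card (Aset v - {length X - (m - 1)})"
proof -
  have eqs: "Aset v - {length X - (m - 1)} = {i. i + m \<le> length X \<and> ow i = v}"
    unfolding Aset_def using m X_len by auto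
  have inj: "inj_on (\<lambda>i. X ! (i + (m - 1))) {i. i + m \<le> length X \<and> ow i = v}"
  proof (rule inj_onI)
    fix i i' assume a: "i \<in> {i. i + m \<le> length X \<and> ow i = v}" "i' \<in> {i. i + m \<le> length X \<and> ow i = v}"
      "X ! (i + (m - 1)) = X ! (i' + (m - 1))"
    then show "i = i'" using win_split1[of i] win_split1[of i'] injW[of i i'] by auto
  qed
  have img: "(\<lambda>i. X ! (i + (m - 1))) ` {i. i + m \<le> length X \<and> ow i = v} = {b. v @ [b] \<in> W}"
  proof
    show "(\<lambda>i. X ! (i + (m - 1))) ` {i. i + m \<le> length X \<and> ow i = v} \<subseteq> {b. v @ [b] \<in> W}"
      using win_split1 memW by force
    show "{b. v @ [b] \<in> W} \<subseteq> (\<lambda>i. X ! (i + (m - 1))) ` {i. i + m \<le> length X \<and> ow i = v}"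
    proof
      fix b assume "b \<in> {b. v @ [b] \<in> W}"
      then obtain i where i: "i + m \<le> length X" "take m (drop i X) = v @ [b]" using memW by auto
      then have "ow i @ [X ! (i + (m - 1))] = v @ [b]" using win_split1 by simp
      then show "b \<in> (\<lambda>i. X ! (i + (m - 1))) ` {i. i + m \<le> length X \<and> ow i = v}"
        using i by (auto intro!: image_eqI[of _ _ i])
    qed
  qed
  show ?thesis unfolding eqs img[symmetric] using card_image[OF inj] by simp
qed

lemma in_eq: "card {a. a # v \<in> W} = card (Aset v - {0})"
proof -
  have eqs: "Aset v - {0} = Suc ` {i. i + m \<le> length X \<and> ow (Suc i) = v}"
  proof
    show "Aset v - {0} \<subseteq> Suc ` {i. i + m \<le> length X \<and> ow (Suc i) = v}"
    proof
      fix i assume "i \<in> Aset v - {0}"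
      then show "i \<in> Suc ` {i. i + m \<le> length X \<and> ow (Suc i) = v}"
        unfolding Aset_def using m by (cases i) auto
    qed
    show "Suc ` {i. i + m \<le> length X \<and> ow (Suc i) = v} \<subseteq> Aset v - {0}"
      unfolding Aset_def using m by auto
  qed
  have c1: "card (Aset v - {0}) = card {i. i + m \<le> length X \<and> ow (Suc i) = v}"
    unfolding eqs by (rule card_image) simp
  have inj: "inj_on (\<lambda>i. X ! i) {i. i + m \<le> length X \<and> ow (Suc i) = v}"
  proof (rule inj_onI)
    fix i i' assume a: "i \<in> {i. i + m \<le> length X \<and> ow (Suc i) = v}" "i' \<in> {i. i + m \<le> length X \<and> ow (Suc i) = v}"
      "X ! i = X ! i'"
    then show "i = i'" using win_split2[of i] win_split2[of i'] injW[of i i'] by auto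
  qed
  have img: "(\<lambda>i. X ! i) ` {i. i + m \<le> length X \<and> ow (Suc i) = v} = {a. a # v \<in> W}"
  proof
    show "(\<lambda>i. X ! i) ` {i. i + m \<le> length X \<and> ow (Suc i) = v} \<subseteq> {a. a # v \<in> W}"
      using win_split2 memW by force
    show "{a. a # v \<in> W} \<subseteq> (\<lambda>i. X ! i) ` {i. i + m \<le> length X \<and> ow (Suc i) = v}"
    proof
      fix a assume "a \<in> {a. a # v \<in> W}"
      then obtain i where i: "i + m \<le> length X" "take m (drop i X) = a # v" using memW by auto
      then have "X ! i # ow (Suc i) = a # v" using win_split2 by simp
      then show "a \<in> (\<lambda>i. X ! i) ` {i. i + m \<le> length X \<and> ow (Suc i) = v}"
        using i by (auto intro!: image_eqI[of _ _ i])
    qed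
  qed
  show ?thesis unfolding c1 img[symmetric] using card_image[OF inj] by simp
qed

lemma card_bool_le: "card (B :: bool set) \<le> 2"
proof -
  have "card B \<le> card (UNIV :: bool set)" by (rule card_mono) auto
  then show ?thesis by simp
qed

lemma ow0: "ow 0 = replicate (m - 1) True"
  using X_pre unfolding ow_def by auto

abbreviation "E \<equiv> drop (length X - (m - 1)) X"

lemma owN: "ow (length X - (m - 1)) = E"
  unfolding ow_def using X_len by simp

lemma E_eq: "E = replicate (m - 1) True"
proof (rule ccontr)
  assume ne: "E \<noteq> replicate (m - 1) True"
  let ?N = "length X - (m - 1)"
  have o2: "card {b. E @ [b] \<in> W} = 2"
  proof -
    have "{b. E @ [b] \<in> W} = UNIV" using MX_both[OF m] by auto
    then show ?thesis by simp
  qed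
  have N_in: "?N \<in> Aset E" unfolding Aset_def using owN X_len by auto
  have z_out: "0 \<notin> Aset E" unfolding Aset_def using ow0 ne by auto
  have c1: "card {a. a # E \<in> W} = card (Aset E - {0})" by (rule in_eq)
  have c1': "Aset E - {0} = Aset E" using z_out by blast
  have c2: "card (Aset E) = Suc (card (Aset E - {?N}))"
    using card_Suc_Diff1[OF finite_Aset N_in] by linarith
  have c3: "card (Aset E - {?N}) = 2" using o2 out_eq[of E] by linarith
  have "card {a. a # E \<in> W} = 3" using c1 c1' c2 c3 by simp
  then show False using card_bool_le[of "{a. a # E \<in> W}"] by linarith
qed

lemma balanced: "card {a. a # v \<in> W} = card {b. v @ [b] \<in> W}"
proof -
  let ?N = "length X - (m - 1)"
  have i1: "card {a. a # v \<in> W} = card (Aset v - {0})" by (rule in_eq)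
  have o1: "card {b. v @ [b] \<in> W} = card (Aset v - {?N})" by (rule out_eq)
  have owN': "ow ?N = replicate (m - 1) True" using owN E_eq by simp
  have N_le: "?N + (m - 1) \<le> length X" using X_len by simp
  show ?thesis
  proof (cases "v = replicate (m - 1) True")
    case True
    have N_in: "?N \<in> Aset v" unfolding Aset_def using owN' N_le True by simp
    have z_in: "0 \<in> Aset v" unfolding Aset_def using ow0 True X_len by simp
    have "card (Aset v - {0}) = card (Aset v) - 1" using card_Diff_singleton[OF z_in] .
    moreover have "card (Aset v - {?N}) = card (Aset v) - 1" using card_Diff_singleton[OF N_in] .
    ultimately show ?thesis using i1 o1 by linarith
  next
    case False
    have N_out: "?N \<notin> Aset v" unfolding Aset_def using owN' False by simp
    have z_out: "0 \<notin> Aset v" unfolding Aset_def using ow0 False by simp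
    have "Aset v - {0} = Aset v" using z_out by blast
    moreover have "Aset v - {?N} = Aset v" using N_out by blast
    ultimately show ?thesis using i1 o1 by simp
  qed
qed


lemma greedyW:
  assumes "v @ [True] \<in> W" shows "v @ [False] \<in> W"
proof -
  obtain p where p: "p + m \<le> length X" "take m (drop p X) = v @ [True]" using assms memW by auto
  then have e: "ow p @ [X ! (p + (m - 1))] = v @ [True]" using win_split1 by simp
  then have owp: "ow p = v" and xi: "X ! (p + (m - 1))" by auto
  let ?i = "p + (m - 1)"
  have "m - 1 \<le> ?i \<and> ?i < length X \<and> X ! ?i" using p(1) m xi by auto
  then obtain q where q: "q + m \<le> ?i" "take m (drop q X) = take (m - 1) (drop (?i - (m - 1)) X) @ [False]"
    using X_greedy unfolding greedy_def by blast
  have "take m (drop q X) = v @ [False]" using q(2) owp unfolding ow_def by simp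
  moreover have "q + m \<le> length X" using q(1) p(1) by simp
  ultimately show ?thesis using memW by auto
qed

lemma card_bool_minus: "card (UNIV - {x :: bool}) = 1"
  using card_Diff_singleton[of x "UNIV :: bool set"] by simp

lemma step_absent:
  assumes u: "u \<noteq> []" "u @ [True] \<notin> W"
  shows "(tl u @ [True]) @ [True] \<notin> W"
proof
  let ?v = "tl u @ [True]"
  assume a: "?v @ [True] \<in> W"
  have e: "hd u # ?v = u @ [True]" using u(1) by (cases u) auto
  have sub: "{a. a # ?v \<in> W} \<subseteq> UNIV - {hd u}"
  proof
    fix a assume "a \<in> {a. a # ?v \<in> W}"
    then have h1: "a # ?v \<in> W" by simp
    have "a \<noteq> hd u"
    proof
      assume h2: "a = hd u"
      from h1 have "hd u # ?v \<in> W" unfolding h2 .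
      then have "u @ [True] \<in> W" unfolding e .
      then show False using u(2) by contradiction
    qed
    then show "a \<in> UNIV - {hd u}" by simp
  qed
  have c0: "card {a. a # ?v \<in> W} \<le> 1"
    using card_mono[OF _ sub] card_bool_minus[of "hd u"] by simp
  have c1: "card {b. ?v @ [b] \<in> W} \<le> 1" using c0 balanced[of ?v] by linarith
  have f: "?v @ [False] \<in> W" using greedyW[OF a] .
  have U: "{b. ?v @ [b] \<in> W} = UNIV"
  proof (rule set_eqI)
    fix b show "b \<in> {b. ?v @ [b] \<in> W} \<longleftrightarrow> b \<in> UNIV"
      using a f by (cases b) auto
  qed
  have "card {b. ?v @ [b] \<in> W} = 2" unfolding U by simp
  then show False using c1 by linarith
qed

lemma iter_absent:
  assumes v: "length v = m - 1" "v @ [True] \<notin> W"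
  shows "k \<le> m - 1 \<Longrightarrow> (drop k v @ replicate k True) @ [True] \<notin> W"
proof (induction k)
  case 0 then show ?case using v by simp
next
  case (Suc k)
  let ?u = "drop k v @ replicate k True"
  have k: "k < length v" using Suc.prems v by simp
  have ne: "?u \<noteq> []" using k by simp
  have "?u @ [True] \<notin> W" using Suc by simp
  from step_absent[OF ne this] have "(tl ?u @ [True]) @ [True] \<notin> W" .
  moreover have "tl ?u @ [True] = drop (Suc k) v @ replicate (Suc k) True"
    using k by (simp add: drop_Suc tl_drop replicate_append_same)
  ultimately show ?case by simp
qed

lemma all_true: "length v = m - 1 \<Longrightarrow> v @ [True] \<in> W"
proof (rule ccontr)
  assume v: "length v = m - 1" "v @ [True] \<notin> W"
  have "(drop (m - 1) v @ replicate (m - 1) True) @ [True] \<notin> W" using iter_absent[OF v] by simp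
  then have "replicate (m - 1) True @ [True] \<notin> W" using v(1) by simp
  moreover have "E @ [True] \<in> W" using MX_both[OF m] .
  ultimately show False using E_eq by simp
qed

lemma all_words: "length u = m \<Longrightarrow> u \<in> W"
proof -
  assume u: "length u = m"
  then have ne: "u \<noteq> []" using m by auto
  have lb: "length (butlast u) = m - 1" using u by simp
  show "u \<in> W"
  proof (cases "last u")
    case True
    then have "butlast u @ [last u] \<in> W" using all_true[OF lb] by simp
    then show ?thesis using append_butlast_last_id[OF ne] by simp
  next
    case False
    then have "butlast u @ [last u] \<in> W" using greedyW[OF all_true[OF lb]] by simp
    then show ?thesis using append_butlast_last_id[OF ne] by simp
  qed
qed

lemma W_eq: "W = {z. length z = m}"
proof
  show "W \<subseteq> {z. length z = m}" by (rule set_subwords_len)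
  show "{z. length z = m} \<subseteq> W" using all_words by auto
qed

lemma X_length: "length X = 2 ^ m + (m - 1)"
proof -
  have "length (subwords m X) = card W" using distinct_card[OF X_dist] by simp
  also have "\<dots> = 2 ^ m" unfolding W_eq by (rule card_bool_lists)
  finally have "Suc (length X) - m = 2 ^ m" by (simp add: length_subwords)
  then show ?thesis using m X_len by linarith
qed

end


definition cw :: "bool list \<Rightarrow> nat \<Rightarrow> nat \<Rightarrow> bool list" where
  "cw d p r = map (\<lambda>k. d ! ((p + k) mod length d)) [0..<r]"

lemma length_cw[simp]: "length (cw d p r) = r" by (simp add: cw_def)

lemma nth_cw: "k < r \<Longrightarrow> cw d p r ! k = d ! ((p + k) mod length d)" by (simp add: cw_def)

lemma m_lt_pow: "m - 1 < (2::nat) ^ m"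
  by (metis diff_le_self le_less_trans less_exp)

lemma mod_back:
  fixes c P x :: nat
  assumes cP: "c < P" and x: "x < P"
  shows "((x + c) mod P + (P - c)) mod P = x"
proof -
  have "((x + c) mod P + (P - c)) mod P = (x + c + (P - c)) mod P" by (simp add: mod_add_left_eq)
  also have "x + c + (P - c) = x + P" using cP by simp
  finally show ?thesis using x by simp
qed

lemma db_MX: "db m = drop (m - 1) (MX m)"
  unfolding db_def MX_def mx_def ..

context
  fixes m :: nat
  assumes m: "m \<ge> 1"
begin

lemma db_len: "length (db m) = 2 ^ m"
  unfolding db_MX using X_length[OF m] by simp

lemma X_nth: "q < length (MX m) \<Longrightarrow> MX m ! q = db m ! ((q + (2 ^ m - (m - 1))) mod 2 ^ m)"
proof -
  assume q: "q < length (MX m)"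
  let ?P = "2 ^ m :: nat" and ?c = "m - 1"
  have cP: "?c < ?P" by (rule m_lt_pow)
  obtain y where xy: "MX m = replicate ?c True @ y" using X_pre[OF m] by auto
  have y: "db m = y" unfolding db_MX xy by simp
  have ly: "length y = ?P" using db_len y by simp
  have dP: "drop ?P (MX m) = replicate ?c True"
    using E_eq[OF m] X_length[OF m] by simp
  show ?thesis
  proof (cases "?c \<le> q")
    case True
    have "(q + (?P - ?c)) mod ?P = q - ?c"
    proof -
      have "q + (?P - ?c) = (q - ?c) + ?P" using True cP by simp
      moreover have "q - ?c < ?P" using q X_length[OF m] True by linarith
      ultimately show ?thesis by simp
    qed
    then show ?thesis unfolding y using True xy by (simp add: nth_append)
  next
    case False
    have md: "(q + (?P - ?c)) mod ?P = q + (?P - ?c)" using False cP by simp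
    have "MX m ! q = True" using False xy by (simp add: nth_append)
    moreover have "y ! (q + (?P - ?c)) = MX m ! (q + ?P)"
      using False cP xy by (simp add: nth_append)
    moreover have "MX m ! (q + ?P) = True"
    proof -
      have "MX m ! (q + ?P) = drop ?P (MX m) ! q" using q X_length[OF m] False by (simp add: add.commute)
      then show ?thesis using dP False by simp
    qed
    ultimately show ?thesis unfolding y md by simp
  qed
qed

lemma win_cw: "q + m \<le> length (MX m) \<Longrightarrow> take m (drop q (MX m)) = cw (db m) ((q + (2 ^ m - (m - 1))) mod 2 ^ m) m"
proof (rule nth_equalityI)
  assume q: "q + m \<le> length (MX m)"
  then show "length (take m (drop q (MX m))) = length (cw (db m) ((q + (2 ^ m - (m - 1))) mod 2 ^ m) m)" by simp
  fix k assume "k < length (take m (drop q (MX m)))"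
  then have k: "k < m" by simp
  have "take m (drop q (MX m)) ! k = MX m ! (q + k)" using k q by simp
  also have "\<dots> = db m ! ((q + k + (2 ^ m - (m - 1))) mod 2 ^ m)" using X_nth k q by simp
  also have "\<dots> = cw (db m) ((q + (2 ^ m - (m - 1))) mod 2 ^ m) m ! k"
  proof -
    have "(k + (q + (2 ^ m - (m - 1))) mod 2 ^ m) mod 2 ^ m = (k + (q + (2 ^ m - (m - 1)))) mod 2 ^ m"
      by (rule mod_add_right_eq)
    also have "k + (q + (2 ^ m - (m - 1))) = q + k + (2 ^ m - (m - 1))" by simp
    finally have "(k + (q + (2 ^ m - (m - 1))) mod 2 ^ m) mod 2 ^ m = (q + k + (2 ^ m - (m - 1))) mod 2 ^ m" .
    then show ?thesis using k by (simp add: nth_cw db_len add.commute)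
  qed
  finally show "take m (drop q (MX m)) ! k = cw (db m) ((q + (2 ^ m - (m - 1))) mod 2 ^ m) m ! k" .
qed

lemma db_surj: "length u = m \<Longrightarrow> \<exists>p < 2 ^ m. cw (db m) p m = u"
proof -
  assume u: "length u = m"
  then have "u \<in> set (subwords m (MX m))" using all_words[OF m] by simp
  then obtain q where q: "q + m \<le> length (MX m)" "take m (drop q (MX m)) = u" using memW[OF m] by auto
  show ?thesis using win_cw[OF q(1)] q(2) by (intro exI[of _ "(q + (2 ^ m - (m - 1))) mod 2 ^ m"]) simp
qed

lemma db_inj:
  assumes p: "p < 2 ^ m" "p' < 2 ^ m" and e: "cw (db m) p m = cw (db m) p' m"
  shows "p = p'"
proof -
  let ?P = "2 ^ m :: nat" and ?c = "m - 1"
  have cP: "?c < ?P" by (rule m_lt_pow)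
  have qle: "(x + ?c) mod ?P + m \<le> length (MX m)" for x
  proof -
    have "(x + ?c) mod ?P < ?P" by simp
    then show ?thesis using X_length[OF m] m by linarith
  qed
  have w1: "take m (drop ((p + ?c) mod ?P) (MX m)) = cw (db m) p m"
    using win_cw[OF qle[of p]] unfolding mod_back[OF cP p(1)] .
  have w2: "take m (drop ((p' + ?c) mod ?P) (MX m)) = cw (db m) p' m"
    using win_cw[OF qle[of p']] unfolding mod_back[OF cP p(2)] .
  have eq: "(p + ?c) mod ?P = (p' + ?c) mod ?P"
    using injW[OF m qle[of p] qle[of p']] w1 w2 e by argo
  have "p = ((p + ?c) mod ?P + (?P - ?c)) mod ?P" using mod_back[OF cP p(1)] by argo
  also have "\<dots> = ((p' + ?c) mod ?P + (?P - ?c)) mod ?P" unfolding eq ..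
  also have "\<dots> = p'" by (rule mod_back[OF cP p(2)])
  finally show ?thesis .
qed

end


lemma occ_finite: "finite {i. i + length w \<le> length x \<and> take (length w) (drop i x) = w}"
  by (rule finite_subset[of _ "{..length x}"]) auto

lemma occ_pos_iff: "occ x w > 0 \<longleftrightarrow> (\<exists>i. i + length w \<le> length x \<and> take (length w) (drop i x) = w)"
  unfolding occ_def using occ_finite[of w x] by (auto simp: card_gt_0_iff)

lemma occ_append_le: "occ x (u @ v) \<le> occ x v"
proof -
  let ?A = "{i. i + length (u @ v) \<le> length x \<and> take (length (u @ v)) (drop i x) = u @ v}"
  let ?B = "{i. i + length v \<le> length x \<and> take (length v) (drop i x) = v}"
  have "(\<lambda>i. i + length u) ` ?A \<subseteq> ?B"
  proof
    fix j assume "j \<in> (\<lambda>i. i + length u) ` ?A"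
    then obtain i where i: "i \<in> ?A" "j = i + length u" by auto
    have "take (length v) (drop (length u) (take (length (u @ v)) (drop i x))) = v"
      using i(1) by simp
    then have "take (length v) (drop (i + length u) x) = v"
      by (simp add: drop_take add.commute drop_drop)
    then show "j \<in> ?B" using i by simp
  qed
  moreover have "inj_on (\<lambda>i. i + length u) ?A" by (rule inj_onI) simp
  ultimately have "card ?A \<le> card ?B" using card_inj_on_le occ_finite by blast
  then show ?thesis unfolding occ_def .
qed

lemma suffix_of_len_len: "l \<le> length x \<Longrightarrow> length (suffix_of_len x l) = l"
  by (simp add: suffix_of_len_def)

lemma suffix_split:
  assumes "l' \<le> l" "l \<le> length x"
  shows "suffix_of_len x l = take (l - l') (suffix_of_len x l) @ suffix_of_len x l'"
proof -
  have "drop (l - l') (suffix_of_len x l) = suffix_of_len x l'"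
    using assms by (simp add: suffix_of_len_def add.commute)
  then show ?thesis by (metis append_take_drop_id)
qed

lemma occ_suffix_mono:
  assumes "l' \<le> l" "l \<le> length x"
  shows "occ x (suffix_of_len x l) \<le> occ x (suffix_of_len x l')"
  using occ_append_le suffix_split[OF assms] by metis

lemma freq_sum_le: "freq x c False + freq x c True \<le> occ x c"
proof -
  let ?S = "\<lambda>b. {i. i + length (c @ [b]) \<le> length x \<and> take (length (c @ [b])) (drop i x) = c @ [b]}"
  let ?C = "{i. i + length c \<le> length x \<and> take (length c) (drop i x) = c}"
  have sub: "?S b \<subseteq> ?C" for b
  proof
    fix i assume "i \<in> ?S b"
    then have h: "i + length c + 1 \<le> length x" "take (Suc (length c)) (drop i x) = c @ [b]" by auto
    have "take (length c) (take (Suc (length c)) (drop i x)) = c" using h(2) by simp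
    then have "take (length c) (drop i x) = c" by (simp add: min_def)
    then show "i \<in> ?C" using h by simp
  qed
  have disj: "?S False \<inter> ?S True = {}"
  proof -
    have "i \<in> ?S False \<Longrightarrow> i \<in> ?S True \<Longrightarrow> False" for i by auto
    then show ?thesis by blast
  qed
  have "card (?S False) + card (?S True) = card (?S False \<union> ?S True)"
    using card_Un_disjoint[OF occ_finite occ_finite disj] by simp
  also have "\<dots> \<le> card ?C" using sub by (intro card_mono[OF occ_finite]) auto
  finally show ?thesis unfolding freq_def occ_def .
qed

lemma esc_le2: "esc x c \<le> 2"
proof -
  have "card {b. occ x (c @ [b]) > 0} \<le> card (UNIV :: bool set)" by (rule card_mono) auto
  then show ?thesis unfolding esc_def by simp
qed

lemma esc2_freq:
  assumes "esc x c = 2" shows "freq x c b > 0"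
proof -
  have "{b. occ x (c @ [b]) > 0} = UNIV"
  proof (rule card_subset_eq)
    show "card {b. occ x (c @ [b]) > 0} = card (UNIV :: bool set)" using assms unfolding esc_def by simp
  qed auto
  then show ?thesis unfolding freq_def by auto
qed


lemma rev_filter_head:
  assumes "l0 < N" "P l0"
  shows "\<exists>l' L'. rev (filter P [0..<N]) = l' # L' \<and> P l' \<and> l0 \<le> l' \<and> l' < N"
  using assms
proof (induction N)
  case 0 then show ?case by simp
next
  case (Suc N)
  show ?case
  proof (cases "P N")
    case True
    then show ?thesis using Suc.prems by auto
  next
    case False
    then have "l0 < N" using Suc.prems by (cases "l0 = N") auto
    then obtain l' L' where "rev (filter P [0..<N]) = l' # L'" "P l'" "l0 \<le> l'" "l' < N"
      using Suc by blast
    then show ?thesis using False by auto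
  qed
qed

lemma rev_filter_le:
  assumes "c \<le> n" "P c"
  shows "rev (filter (\<lambda>l. l \<le> c) (filter P [0..<Suc n])) = c # rev (filter P [0..<c])"
proof -
  have u: "[0..<Suc n] = [0..<Suc c] @ [Suc c..<Suc n]"
  proof -
    have "[0..<Suc c + (n - c)] = [0..<Suc c] @ [Suc c..<Suc c + (n - c)]" by (rule upt_add_eq_append) simp
    moreover have "Suc c + (n - c) = Suc n" using assms(1) by simp
    ultimately show ?thesis by simp
  qed
  have a1: "filter (\<lambda>l. l \<le> c) (filter P [0..<Suc c]) = filter P [0..<Suc c]"
    by (rule filter_True) auto
  have a2: "filter (\<lambda>l. l \<le> c) (filter P [Suc c..<Suc n]) = []"
    by (rule filter_False) auto
  have "filter (\<lambda>l. l \<le> c) (filter P [0..<Suc n]) = filter P [0..<Suc c]"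
    unfolding u filter_append a1 a2 by simp
  also have "\<dots> = filter P [0..<c] @ [c]" using assms(2) by simp
  finally show ?thesis by simp
qed

lemma frac_bound:
  fixes f T e M :: real
  assumes "f \<ge> 1" "0 \<le> T" "T \<le> M" "0 < e" "e \<le> 2"
  shows "f / (T + e) \<ge> 1 / (M + 2)"
proof -
  have "1 / (M + 2) \<le> 1 / (T + e)" using assms by (intro divide_left_mono) auto
  also have "\<dots> \<le> f / (T + e)" using assms by (intro divide_right_mono) auto
  finally show ?thesis .
qed

context
  fixes x :: "bool list" and j :: nat
  assumes j2: "j \<ge> 2"
    and H: "\<forall>w. length w = j \<longrightarrow> (\<exists>i. i + j < length x \<and> take j (drop i x) = w)"
begin

lemma jx: "j < length x"
  using H[rule_format, of "replicate j False"] by auto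

lemma occ_ext:
  assumes "l \<le> j" "length c = l"
  shows "\<exists>i. i + j < length x \<and> take l (drop i x) = c"
proof -
  obtain i where i: "i + j < length x" "take j (drop i x) = c @ replicate (j - l) False"
    using H[rule_format, of "c @ replicate (j - l) False"] assms by auto
  have "take l (take j (drop i x)) = c" unfolding i(2) using assms by simp
  then have "take l (drop i x) = c" using assms by (simp add: min_def)
  then show ?thesis using i(1) by blast
qed

lemma esc_short:
  assumes "l < j" shows "esc x (suffix_of_len x l) = 2"
proof -
  let ?c = "suffix_of_len x l"
  have lc: "length ?c = l" using assms jx by (simp add: suffix_of_len_len)
  have "occ x (?c @ [b]) > 0" for b
  proof -
    obtain i where i: "i + j < length x" "take (Suc l) (drop i x) = ?c @ [b]"
      using occ_ext[of "Suc l" "?c @ [b]"] assms lc by auto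
    then show ?thesis unfolding occ_pos_iff using assms lc by (intro exI[of _ i]) auto
  qed
  then have "{b. occ x (?c @ [b]) > 0} = UNIV" by auto
  then show ?thesis unfolding esc_def by simp
qed

lemma stored_short:
  assumes "l \<le> j" shows "stored x (suffix_of_len x l)"
proof (cases "l = 0")
  case True then show ?thesis by (simp add: stored_def suffix_of_len_def)
next
  case False
  let ?c = "suffix_of_len x l"
  have lx: "l \<le> length x" using assms jx by simp
  have lc: "length ?c = l" using lx by (simp add: suffix_of_len_len)
  obtain i where i: "i + j < length x" "take l (drop i x) = ?c"
    using occ_ext[OF assms lc] by blast
  have ne: "?c \<noteq> []" using lc False by auto
  have cdec: "?c = butlast ?c @ [last ?c]" using ne by simp
  let ?w = "butlast ?c"
  have lw: "length ?w = l - 1" using lc by simp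
  have "take (l - 1) (drop i x) = ?w"
  proof -
    have "take (l - 1) (take l (drop i x)) = take (l - 1) ?c" using i(2) by simp
    then show ?thesis by (simp add: butlast_conv_take lc min_def)
  qed
  then have in1: "i \<in> {p. p + length ?w \<le> length x \<and> take (length ?w) (drop p x) = ?w}"
    using i(1) lw assms by auto
  have "take (l - 1) (drop (length x - l) x) = ?w"
    unfolding butlast_conv_take lc by (simp add: suffix_of_len_def)
  then have in2: "length x - l \<in> {p. p + length ?w \<le> length x \<and> take (length ?w) (drop p x) = ?w}"
    using lw lx by auto
  have neq: "i \<noteq> length x - l" using i(1) assms by simp
  have "card {i, length x - l} \<le> occ x ?w"
    unfolding occ_def using in1 in2 by (intro card_mono[OF occ_finite]) auto
  then have o2: "occ x ?w \<ge> 2" using neq by simp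
  have "take (Suc l) (drop i x) = ?c @ [x ! (i + l)]"
  proof -
    have "take (Suc l) (drop i x) = take l (drop i x) @ [drop i x ! l]"
      using i(1) assms by (intro take_Suc_conv_app_nth) simp
    then show ?thesis using i(2) i(1) assms by simp
  qed
  then have "occ x (?c @ [x ! (i + l)]) > 0"
    unfolding occ_pos_iff using i(1) assms lc by (intro exI[of _ i]) simp
  then have ex: "\<exists>b'. occ x (?c @ [b']) > 0" by blast
  show ?thesis unfolding stored_def
    by (rule disjI2, rule exI[of _ ?w], rule exI[of _ "last ?c"], intro conjI cdec o2 ex)
qed

lemma stored_esc:
  assumes "l \<ge> 1" "l \<le> length x" "stored x (suffix_of_len x l)"
  shows "esc x (suffix_of_len x l) \<ge> 1"
proof -
  let ?c = "suffix_of_len x l"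
  have "length ?c = l" using assms(2) by (rule suffix_of_len_len)
  then have "?c \<noteq> []" using assms(1) by auto
  then obtain w b where "?c = w @ [b]" "\<exists>b'. occ x (?c @ [b']) > 0" using assms(3) unfolding stored_def by blast
  then obtain b' where b': "occ x (?c @ [b']) > 0" by blast
  have "card {b'} \<le> card {b. occ x (?c @ [b]) > 0}" using b' by (intro card_mono) auto
  then show ?thesis unfolding esc_def by simp
qed


lemma enc_lower:
  assumes M: "real (occ x (suffix_of_len x (j - 1))) \<le> M"
  shows "enc_prob x b (ctx_chain x) \<ge> 1 / (M + 2) ^ 2"
proof -
  define P where "P l = stored x (suffix_of_len x l)" for l
  define R where "R = set (relevant_lens x)"
  define D where "D = {l \<in> R. deterministic x (suffix_of_len x l)}"
  have R_eq: "R = {l. l \<le> length x \<and> P l}"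
  proof -
    have "R = {l \<in> {0..<Suc (length x)}. P l}" unfolding R_def relevant_lens_def P_def
      by (simp only: set_filter set_upt)
    then show ?thesis by (auto simp: less_Suc_eq_le)
  qed
  have finR: "finite R" unfolding R_def by simp
  have finD: "finite D" unfolding D_def using finR by simp
  have jR: "j \<in> R" unfolding R_eq P_def using stored_short[of j] jx by simp
  have Dge: "j \<le> l" if "l \<in> D" for l
  proof (rule ccontr)
    assume "\<not> j \<le> l"
    then have "esc x (suffix_of_len x l) = 2" using esc_short by simp
    then show False using that unfolding D_def deterministic_def by simp
  qed
  have cur_eq: "current_len x = (if D \<noteq> {} then Min D else Max R)"
    unfolding current_len_def Let_def D_def R_def by simp
  define cur where "cur = current_len x"
  have curR: "cur \<in> R"
  proof (cases "D = {}")
    case True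
    have "R \<noteq> {}" using jR by auto
    then have "Max R \<in> R" using finR by (rule Max_in[rotated])
    then show ?thesis unfolding cur_def cur_eq using True by simp
  next
    case False
    then have "Min D \<in> D" using finD by simp
    then show ?thesis unfolding cur_def cur_eq using False D_def by auto
  qed
  have curj: "j \<le> cur"
  proof (cases "D = {}")
    case True
    then show ?thesis unfolding cur_def cur_eq using finR jR by simp
  next
    case False
    then have "Min D \<in> D" using finD by simp
    then show ?thesis unfolding cur_def cur_eq using False Dge by simp
  qed
  have curx: "cur \<le> length x" and Pcur: "P cur" using curR unfolding R_eq by auto
  have chain: "ctx_chain x = suffix_of_len x cur # map (suffix_of_len x) (rev (filter P [0..<cur]))"
  proof -
    have "relevant_lens x = filter P [0..<Suc (length x)]" unfolding relevant_lens_def P_def ..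
    then have "rev (filter (\<lambda>l. l \<le> cur) (relevant_lens x)) = cur # rev (filter P [0..<cur])"
      using rev_filter_le[OF curx, of P] Pcur by simp
    then show ?thesis unfolding ctx_chain_def cur_def by simp
  qed
  have M0: "0 \<le> M" using M of_nat_0_le_iff[of "occ x (suffix_of_len x (j - 1))"] by linarith
  have Tb: "real (freq x (suffix_of_len x l) False + freq x (suffix_of_len x l) True) \<le> M"
    if "j - 1 \<le> l" "l \<le> length x" for l
  proof -
    have "freq x (suffix_of_len x l) False + freq x (suffix_of_len x l) True \<le> occ x (suffix_of_len x l)"
      by (rule freq_sum_le)
    also have "\<dots> \<le> occ x (suffix_of_len x (j - 1))" by (rule occ_suffix_mono[OF that])
    finally show ?thesis using M by linarith
  qed
  have sq: "1 / (M + 2) \<ge> 1 / (M + 2) ^ 2"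
  proof -
    have "1 / (M + 2) ^ 2 = (1 / (M + 2)) * (1 / (M + 2))" by (simp add: power2_eq_square)
    also have "\<dots> \<le> (1 / (M + 2)) * 1" using M0 by (intro mult_left_mono) auto
    finally show ?thesis by simp
  qed
  have one_step: "f / (T + e) \<ge> 1 / (M + 2)" if "f \<ge> 1" "0 \<le> T" "T \<le> M" "0 < e" "e \<le> 2"
    for f T e :: real using frac_bound that by blast
  let ?c = "suffix_of_len x cur"
  let ?f = "real (freq x ?c b)"
  let ?T = "real (freq x ?c False + freq x ?c True)"
  let ?e = "real (esc x ?c)"
  have Tc: "?T \<le> M" using Tb[of cur] curj curx by simp
  have ep: "enc_prob x b (ctx_chain x) =
      (if ?f > 0 then ?f / (?T + ?e) else (?e / (?T + ?e)) * enc_prob x b (map (suffix_of_len x) (rev (filter P [0..<cur]))))"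
    unfolding chain by (simp add: Let_def)
  show ?thesis
  proof (cases "D = {}")
    case True
    then have cR: "cur = Max R" unfolding cur_def cur_eq by simp
    have "\<not> deterministic x ?c"
    proof
      assume "deterministic x ?c"
      then have "cur \<in> D" unfolding D_def using curR by simp
      then show False using True by simp
    qed
    then have e1: "esc x ?c \<noteq> 1" unfolding deterministic_def .
    have "esc x ?c \<ge> 1" using stored_esc[of cur] curj j2 curx Pcur unfolding P_def by simp
    then have e2: "esc x ?c = 2" using e1 esc_le2[of x ?c] by linarith
    then have fpos: "freq x ?c b > 0" by (rule esc2_freq)
    then have "enc_prob x b (ctx_chain x) = ?f / (?T + 2)" unfolding ep using e2 by simp
    also have "\<dots> \<ge> 1 / (M + 2)" using fpos Tc by (intro one_step) auto
    finally show ?thesis using sq by linarith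
  next
    case False
    then have cD: "cur = Min D" unfolding cur_def cur_eq by simp
    have "Min D \<in> D" using False finD by simp
    then have "deterministic x ?c" unfolding D_def cD by simp
    then have e1: "esc x ?c = 1" unfolding deterministic_def .
    show ?thesis
    proof (cases "?f > 0")
      case True
      then have "enc_prob x b (ctx_chain x) = ?f / (?T + 1)" unfolding ep using e1 by simp
      also have "\<dots> \<ge> 1 / (M + 2)" using True Tc by (intro one_step) auto
      finally show ?thesis using sq by linarith
    next
      case fz: False
      have lt: "j - 1 < cur" using curj j2 by simp
      have Pj: "P (j - 1)" unfolding P_def by (rule stored_short) simp
      obtain l' L' where hl: "rev (filter P [0..<cur]) = l' # L'" "P l'" "j - 1 \<le> l'" "l' < cur"
        using rev_filter_head[OF lt, of P] Pj by blast
      let ?c' = "suffix_of_len x l'"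
      let ?f' = "real (freq x ?c' b)"
      let ?T' = "real (freq x ?c' False + freq x ?c' True)"
      have l'x: "l' \<le> length x" using hl(4) curx by simp
      have "l' \<notin> D"
      proof
        assume "l' \<in> D"
        then have "Min D \<le> l'" using finD by simp
        then show False using hl(4) cD by simp
      qed
      moreover have "l' \<in> R" unfolding R_eq using hl(2) l'x by simp
      ultimately have "\<not> deterministic x ?c'" unfolding D_def by simp
      then have e1': "esc x ?c' \<noteq> 1" unfolding deterministic_def .
      have "esc x ?c' \<ge> 1" using stored_esc[of l'] hl(2,3) j2 l'x unfolding P_def by simp
      then have e2': "esc x ?c' = 2" using e1' esc_le2[of x ?c'] by linarith
      then have fpos': "freq x ?c' b > 0" by (rule esc2_freq)
      have q: "enc_prob x b (map (suffix_of_len x) (rev (filter P [0..<cur]))) = ?f' / (?T' + 2)"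
        unfolding hl(1) using fpos' e2' by (simp add: Let_def)
      have q2: "?f' / (?T' + 2) \<ge> 1 / (M + 2)" using fpos' Tb[OF hl(3) l'x] by (intro one_step) auto
      have q1: "1 / (?T + 1) \<ge> 1 / (M + 2)" using Tc by (intro one_step) auto
      have "enc_prob x b (ctx_chain x) = (1 / (?T + 1)) * (?f' / (?T' + 2))"
        unfolding ep q using fz e1 by simp
      also have "\<dots> \<ge> (1 / (M + 2)) * (1 / (M + 2))"
        using q1 q2 M0 by (intro mult_mono) auto
      finally show ?thesis by (simp add: power2_eq_square)
    qed
  qed
qed

lemma ppm_cost_bound:
  assumes M: "real (occ x (suffix_of_len x (j - 1))) \<le> M"
  shows "ppm_cost x b \<le> 2 * log 2 (M + 2)"
proof -
  have M0: "0 \<le> M" using M of_nat_0_le_iff[of "occ x (suffix_of_len x (j - 1))"] by linarith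
  have p: "enc_prob x b (ctx_chain x) \<ge> 1 / (M + 2) ^ 2" by (rule enc_lower[OF M])
  have pos: "0 < 1 / (M + 2) ^ 2" using M0 by simp
  have ppos: "0 < enc_prob x b (ctx_chain x)" using p pos by linarith
  have "log 2 (1 / (M + 2) ^ 2) \<le> log 2 (enc_prob x b (ctx_chain x))"
    using p pos ppos by (subst log_le_cancel_iff) auto
  moreover have "log 2 (1 / (M + 2) ^ 2) = - (2 * log 2 (M + 2))"
    using M0 by (simp add: log_divide log_nat_power)
  ultimately show ?thesis unfolding ppm_cost_def by linarith
qed

end


lemma tw: "m \<ge> 1 \<Longrightarrow> 2 ^ two_exp m * odd_part m = m"
  unfolding two_exp_def odd_part_def by (rule dvd_mult_div_cancel[OF multiplicity_dvd])

lemma odd_part_pos: "m \<ge> 1 \<Longrightarrow> odd_part m \<ge> 1"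
  using tw[of m] by (metis One_nat_def less_one mult_0_right not_le zero_neq_one le_zero_eq)

lemma two_exp_odd: "odd m \<Longrightarrow> two_exp m = 0"
  unfolding two_exp_def by (rule not_dvd_imp_multiplicity_0) simp

lemma two_exp_double: "m \<ge> 1 \<Longrightarrow> two_exp (2 * m) = Suc (two_exp m)"
  unfolding two_exp_def by (rule multiplicity_times_same) auto

lemma len_db_rot: "m \<ge> 1 \<Longrightarrow> length (db_rot m i) = 2 ^ m"
  unfolding db_rot_def using db_len[of m] by auto

lemma len_concat_replicate: "length (concat (replicate t d)) = t * length d"
  by (induction t) auto

lemma len_Bblock: "m \<ge> 1 \<Longrightarrow> length (Bblock m i) = odd_part m * 2 ^ m"
  unfolding Bblock_def len_concat_replicate by (simp add: len_db_rot)

lemma len_concat_map_const: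
  assumes "\<And>i. length (f i) = c" shows "length (concat (map f xs)) = length xs * c"
  using assms by (induction xs) auto

lemma len_Sblock: "m \<ge> 1 \<Longrightarrow> length (Sblock m) = m * 2 ^ m"
proof -
  assume m: "m \<ge> 1"
  have "length (Sblock m) = 2 ^ two_exp m * (odd_part m * 2 ^ m)"
    unfolding Sblock_def by (subst len_concat_map_const[of _ "odd_part m * 2 ^ m"]) (use len_Bblock m in auto)
  also have "\<dots> = m * 2 ^ m" using tw[OF m] by (metis mult.assoc)
  finally show ?thesis .
qed

definition Fc :: "nat \<Rightarrow> bool list" where "Fc N = concat (map Sblock [1..<N])"

lemma Soff_Fc: "Soff n = length (Fc n)" unfolding Soff_def Fc_def ..

lemma Fc_split: "1 \<le> a \<Longrightarrow> a \<le> b \<Longrightarrow> Fc b = Fc a @ concat (map Sblock [a..<b])"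
proof -
  assume "1 \<le> a" "a \<le> b"
  then have "[1..<b] = [1..<a] @ [a..<b]" by (metis le_add_diff_inverse upt_add_eq_append)
  then show ?thesis unfolding Fc_def by simp
qed

lemma Fc_Suc: "n \<ge> 1 \<Longrightarrow> Fc (Suc n) = Fc n @ Sblock n"
  unfolding Fc_def by simp

lemma Fc_len_Suc: "n \<ge> 1 \<Longrightarrow> length (Fc (Suc n)) = length (Fc n) + n * 2 ^ n"
  using Fc_Suc len_Sblock by simp

lemma Fc_len_ge: "length (Fc (Suc N)) \<ge> N"
proof (induction N)
  case 0 then show ?case by simp
next
  case (Suc N)
  have "Suc N * 2 ^ Suc N \<ge> 1 * 1" by (intro mult_le_mono) auto
  then show ?case using Fc_len_Suc[of "Suc N"] Suc by linarith
qed

lemma Fc_nth_eq: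
  assumes "i < length (Fc a)" "i < length (Fc b)" shows "Fc a ! i = Fc b ! i"
proof -
  have gen: "Fc a ! i = Fc b ! i" if "a \<le> b" "i < length (Fc a)" for a b
  proof (cases "a = 0")
    case True then show ?thesis using that by (simp add: Fc_def)
  next
    case False
    then have e: "Fc b = Fc a @ concat (map Sblock [a..<b])" using Fc_split[of a b] that by linarith
    show ?thesis unfolding e using that(2) by (rule nth_append_left[symmetric])
  qed
  show ?thesis
  proof (cases "a \<le> b")
    case True then show ?thesis using gen assms by simp
  next
    case False then show ?thesis using gen[of b a] assms by simp
  qed
qed

lemma Sseq_Fc: "i < length (Fc N) \<Longrightarrow> Sseq i = Fc N ! i"
proof -
  assume i: "i < length (Fc N)"
  have "i < length (Fc (Suc (Suc i)))" using Fc_len_ge[of "Suc i"] by simp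
  then have "Fc (i + 2) ! i = Fc N ! i" using i by (intro Fc_nth_eq) simp_all
  then show ?thesis unfolding Sseq_def Fc_def by simp
qed

lemma map_Sseq: "k \<le> length (Fc N) \<Longrightarrow> map Sseq [0..<k] = take k (Fc N)"
proof (rule nth_equalityI)
  assume k: "k \<le> length (Fc N)"
  then show "length (map Sseq [0..<k]) = length (take k (Fc N))" by simp
  fix i assume "i < length (map Sseq [0..<k])"
  then have i: "i < k" by simp
  have "map Sseq [0..<k] ! i = Sseq i" using i by simp
  also have "\<dots> = Fc N ! i" using i k by (intro Sseq_Fc) simp
  also have "\<dots> = take k (Fc N) ! i" using i by simp
  finally show "map Sseq [0..<k] ! i = take k (Fc N) ! i" .
qed


lemma take_drop_nth: "p + r \<le> length y \<Longrightarrow> take r (drop p y) = map (\<lambda>k. y ! (p + k)) [0..<r]"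
  by (rule nth_equalityI) auto

lemma concat_replicate_nth:
  assumes "length d = P" "a < t * P"
  shows "concat (replicate t d) ! a = d ! (a mod P)"
  using assms(2)
proof (induction t arbitrary: a)
  case 0 then show ?case by simp
next
  case (Suc t)
  show ?case
  proof (cases "a < P")
    case True
    then show ?thesis using assms(1) by (simp add: nth_append)
  next
    case False
    then have "a - P < t * P" using Suc.prems by simp
    then have "concat (replicate t d) ! (a - P) = d ! ((a - P) mod P)" using Suc.IH by simp
    moreover have "(a - P) mod P = a mod P" using False by (simp add: le_mod_geq)
    ultimately show ?thesis using False assms(1) by (simp add: nth_append)
  qed
qed

lemma periodic_window:
  assumes "length d = P" "0 < P" "p + r \<le> t * P"
  shows "take r (drop p (concat (replicate t d))) = cw d (p mod P) r"
proof (rule nth_equalityI)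
  have lc: "length (concat (replicate t d)) = t * P" using assms(1) by (simp add: len_concat_replicate)
  show "length (take r (drop p (concat (replicate t d)))) = length (cw d (p mod P) r)"
    using lc assms by simp
  fix k assume "k < length (take r (drop p (concat (replicate t d))))"
  then have k: "k < r" by simp
  have "take r (drop p (concat (replicate t d))) ! k = concat (replicate t d) ! (p + k)"
    using k assms lc by simp
  also have "\<dots> = d ! ((p + k) mod P)" using k assms by (intro concat_replicate_nth) auto
  also have "\<dots> = cw d (p mod P) r ! k" using k assms(1) by (simp add: nth_cw mod_add_left_eq)
  finally show "take r (drop p (concat (replicate t d))) ! k = cw d (p mod P) r ! k" .
qed

lemma take_cw: "r \<le> r' \<Longrightarrow> take r (cw d p r') = cw d p r"
  unfolding cw_def by (simp add: take_map)

lemma rot_nth: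
  assumes "m \<ge> 1" "i < 2 ^ m" "q < 2 ^ m"
  shows "db_rot m i ! q = db m ! ((q + i) mod 2 ^ m)"
proof (cases "q < 2 ^ m - i")
  case True
  then have "(q + i) mod 2 ^ m = q + i" by simp
  then show ?thesis unfolding db_rot_def using True assms db_len[of m] by (simp add: nth_append add.commute)
next
  case False
  then have "(q + i) mod 2 ^ m = q + i - 2 ^ m" using assms by (simp add: le_mod_geq)
  then show ?thesis unfolding db_rot_def using False assms db_len[of m] by (simp add: nth_append)
qed

lemma cw_rot:
  assumes "m \<ge> 1" "i < 2 ^ m"
  shows "cw (db_rot m i) q r = cw (db m) ((q + i) mod 2 ^ m) r"
proof (rule nth_equalityI)
  show "length (cw (db_rot m i) q r) = length (cw (db m) ((q + i) mod 2 ^ m) r)" by simp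
  fix k assume "k < length (cw (db_rot m i) q r)"
  then have k: "k < r" by simp
  have "cw (db_rot m i) q r ! k = db_rot m i ! ((q + k) mod 2 ^ m)"
    using k len_db_rot[OF assms(1)] by (simp add: nth_cw)
  also have "\<dots> = db m ! (((q + k) mod 2 ^ m + i) mod 2 ^ m)" using assms by (intro rot_nth) auto
  also have "((q + k) mod 2 ^ m + i) mod 2 ^ m = ((q + i) mod 2 ^ m + k) mod 2 ^ m"
    by (metis add.commute add.left_commute mod_add_left_eq)
  also have "db m ! \<dots> = cw (db m) ((q + i) mod 2 ^ m) r ! k"
    using k db_len[OF assms(1)] by (simp add: nth_cw)
  finally show "cw (db_rot m i) q r ! k = cw (db m) ((q + i) mod 2 ^ m) r ! k" .
qed

lemma m_less_pow: "m < (2::nat) ^ m" by (rule less_exp)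

lemma block_occ:
  assumes m: "m \<ge> 1" and t: "odd_part m \<ge> 2" and w: "length w \<le> m"
  shows "\<exists>q0. q0 + length w < length (Sblock m) \<and> take (length w) (drop q0 (Sblock m)) = w"
proof -
  let ?P = "2 ^ m :: nat" and ?t = "odd_part m" and ?r = "length w"
  obtain p where p: "p < ?P" "cw (db m) p m = w @ replicate (m - ?r) False"
    using db_surj[OF m, of "w @ replicate (m - ?r) False"] w by auto
  have B0: "Bblock m 0 = concat (replicate ?t (db m))"
    unfolding Bblock_def db_rot_def by simp
  obtain z where Sz: "Sblock m = Bblock m 0 @ z"
  proof -
    have "[0..<2 ^ two_exp m] = 0 # [1..<2 ^ two_exp m]" by (simp add: upt_conv_Cons)
    then show ?thesis using that unfolding Sblock_def by simp
  qed
  have mP: "m < ?P" by (rule m_less_pow)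
  have pr: "p + ?r < 2 * ?P" using p(1) w mP by linarith
  have tP: "2 * ?P \<le> ?t * ?P" using t by simp
  have lB: "length (Bblock m 0) = ?t * ?P" using len_Bblock[OF m] by simp
  have prt: "p + ?r \<le> ?t * ?P" using pr tP by linarith
  have "take ?r (drop p (Bblock m 0)) = cw (db m) (p mod ?P) ?r"
    unfolding B0 using prt db_len[OF m] by (intro periodic_window) auto
  also have "\<dots> = take ?r (cw (db m) p m)" using p(1) w by (simp add: take_cw)
  also have "\<dots> = w" using p(2) by simp
  finally have win: "take ?r (drop p (Bblock m 0)) = w" .
  have "take ?r (drop p (Sblock m)) = take ?r (drop p (Bblock m 0))"
    unfolding Sz using pr tP lB by (intro take_drop_append_le) linarith
  moreover have "p + ?r < length (Sblock m)"
  proof -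
    have "p + ?r < ?t * ?P" using pr tP by linarith
    then show ?thesis unfolding Sz using lB by simp
  qed
  ultimately show ?thesis using win by (intro exI[of _ p]) simp
qed

lemma choose_m:
  assumes n: "n \<ge> 5"
  shows "\<exists>m. (m = n - 1 \<or> m = n - 2) \<and> odd_part m \<ge> 2"
proof (cases "odd_part (n - 1) \<ge> 2")
  case True then show ?thesis by blast
next
  case False
  have "odd_part (n - 1) \<ge> 1" using n by (intro odd_part_pos) simp
  then have o1: "odd_part (n - 1) = 1" using False by linarith
  have e: "2 ^ two_exp (n - 1) = n - 1" using tw[of "n - 1"] n o1 by simp
  have "two_exp (n - 1) \<noteq> 0"
  proof
    assume "two_exp (n - 1) = 0"
    then show False using e n by simp
  qed
  then have ev: "even ((2::nat) ^ two_exp (n - 1))" by simp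
  have "even (n - 1)" using ev unfolding e .
  then have "odd (n - 2)" using n by presburger
  then have "two_exp (n - 2) = 0" by (rule two_exp_odd)
  then have "odd_part (n - 2) = n - 2" unfolding odd_part_def two_exp_def by simp
  then show ?thesis using n by (intro exI[of _ "n - 2"]) simp
qed


lemma take_drop_take: "i + r \<le> k \<Longrightarrow> take r (drop i (take k y)) = take r (drop i y)"
  by (simp add: drop_take take_take min_def)

lemma Fc_len_mono: "1 \<le> a \<Longrightarrow> a \<le> b \<Longrightarrow> length (Fc a) \<le> length (Fc b)"
  using Fc_split[of a b] by simp

lemma H_lift:
  assumes n: "n \<ge> 5" and k: "Soff n \<le> k" "k \<le> length (Fc (Suc n))"
  shows "\<forall>w. length w = n - 2 \<longrightarrow> (\<exists>i. i + (n - 2) < length (take k (Fc (Suc n))) \<and>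
            take (n - 2) (drop i (take k (Fc (Suc n)))) = w)"
proof (intro allI impI)
  fix w :: "bool list" assume w: "length w = n - 2"
  obtain m where m: "m = n - 1 \<or> m = n - 2" "odd_part m \<ge> 2" using choose_m[OF n] by blast
  have m1: "m \<ge> 1" and mn: "m < n" and wm: "length w \<le> m" using m(1) n w by auto
  obtain q0 where q0: "q0 + length w < length (Sblock m)" "take (length w) (drop q0 (Sblock m)) = w"
    using block_occ[OF m1 m(2) wm] by blast
  have F: "Fc (Suc n) = Fc m @ Sblock m @ concat (map Sblock [Suc m..<Suc n])"
  proof -
    have "Fc (Suc n) = Fc m @ concat (map Sblock [m..<Suc n])" using Fc_split[of m "Suc n"] m1 mn by simp
    moreover have "[m..<Suc n] = m # [Suc m..<Suc n]" using mn by (simp add: upt_conv_Cons)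
    ultimately show ?thesis by simp
  qed
  have lm: "length (Fc m) + length (Sblock m) \<le> k"
  proof -
    have "length (Fc (Suc m)) \<le> length (Fc n)" using Fc_len_mono[of "Suc m" n] mn by simp
    then show ?thesis using Fc_Suc[OF m1] k(1) unfolding Soff_Fc by simp
  qed
  let ?i = "length (Fc m) + q0"
  have lt: "?i + (n - 2) < k" using q0(1) lm w by linarith
  have "take (n - 2) (drop ?i (take k (Fc (Suc n)))) = take (n - 2) (drop ?i (Fc (Suc n)))"
    using lt by (intro take_drop_take) simp
  also have "\<dots> = take (n - 2) (drop q0 (Sblock m @ concat (map Sblock [Suc m..<Suc n])))"
    unfolding F by simp
  also have "\<dots> = take (n - 2) (drop q0 (Sblock m))"
    using q0(1) w by (intro take_drop_append_le) simp
  also have "\<dots> = w" using q0(2) w by simp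
  finally have "take (n - 2) (drop ?i (take k (Fc (Suc n)))) = w" .
  moreover have "?i + (n - 2) < length (take k (Fc (Suc n)))" using lt k(2) by simp
  ultimately show "\<exists>i. i + (n - 2) < length (take k (Fc (Suc n))) \<and> take (n - 2) (drop i (take k (Fc (Suc n)))) = w"
    by blast
qed


lemma occ_take_le: "occ (take k y) w \<le> occ y w"
proof -
  have "{i. i + length w \<le> length (take k y) \<and> take (length w) (drop i (take k y)) = w}
        \<subseteq> {i. i + length w \<le> length y \<and> take (length w) (drop i y) = w}"
  proof
    fix i assume "i \<in> {i. i + length w \<le> length (take k y) \<and> take (length w) (drop i (take k y)) = w}"
    then have h: "i + length w \<le> length (take k y)" "take (length w) (drop i (take k y)) = w" by auto
    have "take (length w) (drop i (take k y)) = take (length w) (drop i y)"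
      using h(1) by (intro take_drop_take) simp
    then show "i \<in> {i. i + length w \<le> length y \<and> take (length w) (drop i y) = w}" using h by simp
  qed
  then show ?thesis unfolding occ_def by (rule card_mono[OF occ_finite])
qed

lemma occ_append3:
  assumes r: "r \<le> length w"
  shows "occ (b @ y) w \<le> occ b (take r w) + r + occ y w"
proof -
  let ?O = "{i. i + length w \<le> length (b @ y) \<and> take (length w) (drop i (b @ y)) = w}"
  let ?A = "{i. i + length (take r w) \<le> length b \<and> take (length (take r w)) (drop i b) = take r w}"
  let ?B = "{length b - r..<length b}"
  let ?Cz = "{i. i + length w \<le> length y \<and> take (length w) (drop i y) = w}"
  let ?C = "(\<lambda>i. i + length b) ` ?Cz"
  have lr: "length (take r w) = r" using r by simp
  have sub: "?O \<subseteq> ?A \<union> ?B \<union> ?C"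
  proof
    fix i assume "i \<in> ?O"
    then have h: "i + length w \<le> length (b @ y)" "take (length w) (drop i (b @ y)) = w" by auto
    show "i \<in> ?A \<union> ?B \<union> ?C"
    proof (cases "i + r \<le> length b")
      case True
      have "take r (drop i b) = take r (drop i (b @ y))" using True by (simp add: take_drop_append_le)
      also have "\<dots> = take r (take (length w) (drop i (b @ y)))" using r by (simp add: min_def)
      also have "\<dots> = take r w" using h(2) by simp
      finally have "i \<in> ?A" using True lr by simp
      then show ?thesis by blast
    next
      case False
      show ?thesis
      proof (cases "i < length b")
        case True
        then have "i \<in> ?B" using False by simp
        then show ?thesis by blast
      next
        case ib: False
        have "drop i (b @ y) = drop (i - length b) y" using ib by simp
        then have "i - length b \<in> ?Cz" using h ib by simp
        moreover have "i = (i - length b) + length b" using ib by simp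
        ultimately have "i \<in> ?C" by (intro image_eqI) auto
        then show ?thesis by blast
      qed
    qed
  qed
  have fA: "finite ?A" using occ_finite .
  have fB: "finite ?B" by simp
  have fC: "finite ?C" using occ_finite[of w y] by (rule finite_imageI)
  have "occ (b @ y) w = card ?O" unfolding occ_def ..
  also have "\<dots> \<le> card (?A \<union> ?B \<union> ?C)" using sub fA fB fC by (intro card_mono) auto
  also have "\<dots> \<le> card (?A \<union> ?B) + card ?C" by (rule card_Un_le)
  also have "\<dots> \<le> card ?A + card ?B + card ?C" using card_Un_le[of ?A ?B] by simp
  also have "card ?B \<le> r" by simp
  also have "card ?C \<le> card ?Cz" by (rule card_image_le[OF occ_finite])
  finally show ?thesis unfolding occ_def lr by simp
qed

lemma occ_nil: "w \<noteq> [] \<Longrightarrow> occ [] w = 0"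
  unfolding occ_def by simp

lemma occ_concat:
  assumes "\<forall>q \<in> set qs. R q \<le> length w" "w \<noteq> []"
  shows "occ (concat (map B qs)) w \<le> sum_list (map (\<lambda>q. occ (B q) (take (R q) w) + R q) qs)"
  using assms
proof (induction qs)
  case Nil
  then show ?case using occ_nil by simp
next
  case (Cons q qs)
  have "occ (concat (map B (q # qs))) w = occ (B q @ concat (map B qs)) w" by simp
  also have "\<dots> \<le> occ (B q) (take (R q) w) + R q + occ (concat (map B qs)) w"
    using Cons.prems by (intro occ_append3) simp
  also have "\<dots> \<le> occ (B q) (take (R q) w) + R q + sum_list (map (\<lambda>q. occ (B q) (take (R q) w) + R q) qs)"
    using Cons by simp
  finally show ?case by simp
qed


lemma card_prefix_lists:
  assumes "length u = r" "r \<le> m"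
  shows "card {z :: bool list. length z = m \<and> take r z = u} = 2 ^ (m - r)"
proof -
  have e: "{z :: bool list. length z = m \<and> take r z = u} = (\<lambda>y. u @ y) ` {y. length y = m - r}"
  proof
    show "{z. length z = m \<and> take r z = u} \<subseteq> (\<lambda>y. u @ y) ` {y. length y = m - r}"
    proof
      fix z :: "bool list" assume "z \<in> {z. length z = m \<and> take r z = u}"
      then have z: "length z = m" "take r z = u" by auto
      have "z = u @ drop r z" using z(2) by (metis append_take_drop_id)
      moreover have "length (drop r z) = m - r" using z(1) by simp
      ultimately show "z \<in> (\<lambda>y. u @ y) ` {y. length y = m - r}" by blast
    qed
    show "(\<lambda>y. u @ y) ` {y. length y = m - r} \<subseteq> {z. length z = m \<and> take r z = u}"
      using assms by auto
  qed
  have "inj_on (\<lambda>y. u @ y) {y. length y = m - r}" by (rule inj_onI) simp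
  then have "card ((\<lambda>y. u @ y) ` {y :: bool list. length y = m - r}) = card {y :: bool list. length y = m - r}"
    by (rule card_image)
  then show ?thesis unfolding e card_bool_lists .
qed

lemma occ_block:
  assumes m: "m \<ge> 1" and i: "i < 2 ^ m" and u: "length u = r" "1 \<le> r" "r \<le> m"
  shows "occ (Bblock m i) u \<le> odd_part m * 2 ^ (m - r)"
proof -
  let ?P = "2 ^ m :: nat" and ?t = "odd_part m" and ?d = "db_rot m i"
  let ?B = "Bblock m i"
  let ?O = "{p. p + length u \<le> length ?B \<and> take (length u) (drop p ?B) = u}"
  let ?Q = "{q. q < ?P \<and> cw ?d q r = u}"
  have ld: "length ?d = ?P" using len_db_rot[OF m] .
  have lB: "length ?B = ?t * ?P" using len_Bblock[OF m] .
  have B: "?B = concat (replicate ?t ?d)" unfolding Bblock_def ..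
  have sub: "(\<lambda>p. (p div ?P, p mod ?P)) ` ?O \<subseteq> {..<?t} \<times> ?Q"
  proof
    fix z assume "z \<in> (\<lambda>p. (p div ?P, p mod ?P)) ` ?O"
    then obtain p where p: "p \<in> ?O" "z = (p div ?P, p mod ?P)" by blast
    have h: "p + r \<le> ?t * ?P" "take r (drop p ?B) = u" using p(1) u lB by auto
    have "p < ?t * ?P" using h(1) u(2) by linarith
    then have "p div ?P < ?t" by (simp add: div_less_iff_less_mult)
    moreover have "cw ?d (p mod ?P) r = u"
      using h(2) periodic_window[OF ld _ h(1)] unfolding B by simp
    ultimately show "z \<in> {..<?t} \<times> ?Q" using p(2) by simp
  qed
  have inj: "inj_on (\<lambda>p. (p div ?P, p mod ?P)) ?O"
    by (rule inj_onI) (metis prod.inject div_mult_mod_eq)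
  have fQ: "finite ?Q" by simp
  have "occ ?B u = card ?O" unfolding occ_def ..
  also have "\<dots> = card ((\<lambda>p. (p div ?P, p mod ?P)) ` ?O)" using card_image[OF inj] by simp
  also have "\<dots> \<le> card ({..<?t} \<times> ?Q)" using sub fQ by (intro card_mono) auto
  also have "\<dots> = ?t * card ?Q" by (simp add: card_cartesian_product)
  also have "card ?Q \<le> 2 ^ (m - r)"
  proof -
    let ?Z = "{z :: bool list. length z = m \<and> take r z = u}"
    have sQ: "(\<lambda>q. cw ?d q m) ` ?Q \<subseteq> ?Z"
    proof
      fix z assume "z \<in> (\<lambda>q. cw ?d q m) ` ?Q"
      then obtain q where q: "q \<in> ?Q" "z = cw ?d q m" by blast
      have "take r (cw ?d q m) = cw ?d q r" using u(3) by (rule take_cw)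
      then show "z \<in> ?Z" using q by simp
    qed
    have injQ: "inj_on (\<lambda>q. cw ?d q m) ?Q"
    proof (rule inj_onI)
      fix q q' assume q: "q \<in> ?Q" "q' \<in> ?Q" and e: "cw ?d q m = cw ?d q' m"
      have "cw (db m) ((q + i) mod ?P) m = cw (db m) ((q' + i) mod ?P) m"
        using e cw_rot[OF m i] by simp
      then have eq: "(q + i) mod ?P = (q' + i) mod ?P" using db_inj[OF m, of "(q + i) mod ?P" "(q' + i) mod ?P"] by simp
      have "q = ((q + i) mod ?P + (?P - i)) mod ?P" using mod_back[OF i, of q] q by simp
      also have "\<dots> = ((q' + i) mod ?P + (?P - i)) mod ?P" unfolding eq ..
      also have "\<dots> = q'" using mod_back[OF i, of q'] q by simp
      finally show "q = q'" .
    qed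
    have "card ?Q = card ((\<lambda>q. cw ?d q m) ` ?Q)" using card_image[OF injQ] by simp
    also have "\<dots> \<le> card ?Z" using sQ finite_bool_lists[of m]
      by (intro card_mono) (auto intro: finite_subset)
    also have "\<dots> = 2 ^ (m - r)" using card_prefix_lists u by simp
    finally show ?thesis .
  qed
  finally show ?thesis by simp
qed


lemma concat_concat': "concat (concat xss) = concat (map concat xss)"
  by (induction xss) auto

lemma sum_list_concat': "sum_list (map f (concat xss)) = sum_list (map (\<lambda>xs. sum_list (map f xs)) xss)"
  for f :: "'a \<Rightarrow> nat"
  by (induction xss) auto

definition gsum :: "nat \<Rightarrow> nat" where "gsum n = sum_list (map (\<lambda>m. 2 ^ two_exp m) [1..<Suc n])"

lemma pow_two_exp_le: "m \<ge> 1 \<Longrightarrow> 2 ^ two_exp m \<le> m"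
  using tw[of m] odd_part_pos[of m] by (metis mult_le_mono2 mult.right_neutral)

lemma occ_Fc_bound:
  assumes n: "n \<ge> 4" and w: "length w = n - 3"
  shows "occ (Fc (Suc n)) w \<le> 8 * n * n + n * gsum n"
proof -
  define qs where "qs = concat (map (\<lambda>m. map (Pair m) [0..<2 ^ two_exp m]) [1..<Suc n])"
  define B where "B = (\<lambda>q. Bblock (fst q) (snd q))"
  define R where "R = (\<lambda>q :: nat \<times> nat. min (n - 3) (fst q))"
  have memq: "1 \<le> fst q \<and> fst q \<le> n \<and> snd q < 2 ^ two_exp (fst q)" if "q \<in> set qs" for q
    using that unfolding qs_def by auto
  have F: "concat (map B qs) = Fc (Suc n)"
    unfolding qs_def B_def Fc_def Sblock_def map_concat concat_concat' by (simp add: comp_def)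
  have wne: "w \<noteq> []" using w n by auto
  have occ1: "occ (Fc (Suc n)) w \<le> sum_list (map (\<lambda>q. occ (B q) (take (R q) w) + R q) qs)"
    unfolding F[symmetric] by (rule occ_concat) (use w R_def wne in auto)
  have hb: "occ (B q) (take (R q) w) + R q \<le> 8 * odd_part (fst q) + n" if q: "q \<in> set qs" for q
  proof -
    obtain m i where qi: "q = (m, i)" by (cases q)
    have m: "1 \<le> m" "m \<le> n" and i: "i < 2 ^ two_exp m" using memq[OF q] qi by auto
    have iP: "i < 2 ^ m" using i pow_two_exp_le[OF m(1)] m_less_pow[of m] by linarith
    let ?r = "min (n - 3) m"
    have r1: "1 \<le> ?r" using n m by simp
    have "occ (Bblock m i) (take ?r w) \<le> odd_part m * 2 ^ (m - ?r)"
      using w by (intro occ_block[OF m(1) iP]) (use r1 n in auto)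
    also have "\<dots> \<le> odd_part m * 8"
    proof -
      have "m - ?r \<le> 3" using m n by simp
      then have "(2::nat) ^ (m - ?r) \<le> 2 ^ 3" by (intro power_increasing) auto
      then show ?thesis by simp
    qed
    finally show ?thesis unfolding qi B_def R_def using m by simp
  qed
  have "sum_list (map (\<lambda>q. occ (B q) (take (R q) w) + R q) qs) \<le> sum_list (map (\<lambda>q. 8 * odd_part (fst q) + n) qs)"
    by (rule sum_list_mono) (rule hb)
  also have "\<dots> = sum_list (map (\<lambda>m. 2 ^ two_exp m * (8 * odd_part m + n)) [1..<Suc n])"
    unfolding qs_def sum_list_concat' by (simp add: comp_def sum_list_triv)
  also have "\<dots> \<le> sum_list (map (\<lambda>m. 8 * n + n * 2 ^ two_exp m) [1..<Suc n])"
  proof (rule sum_list_mono)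
    fix m assume "m \<in> set [1..<Suc n]"
    then have m: "1 \<le> m" "m \<le> n" by auto
    have "2 ^ two_exp m * (8 * odd_part m + n) = 8 * m + n * 2 ^ two_exp m"
      using tw[OF m(1)] by (simp add: algebra_simps)
    then show "2 ^ two_exp m * (8 * odd_part m + n) \<le> 8 * n + n * 2 ^ two_exp m" using m by simp
  qed
  also have "\<dots> = n * (8 * n) + n * gsum n"
    unfolding sum_list_addf gsum_def sum_list_const_mult by (simp add: sum_list_triv)
  finally show ?thesis using occ1 by (simp add: algebra_simps)
qed


lemma gsum_0: "gsum 0 = 0" unfolding gsum_def by simp

lemma gsum_Suc: "gsum (Suc n) = gsum n + 2 ^ two_exp (Suc n)"
  unfolding gsum_def by simp

lemma gsum_double: "gsum (2 * K) = K + 2 * gsum K"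
proof (induction K)
  case 0 then show ?case by (simp add: gsum_0)
next
  case (Suc K)
  have o: "two_exp (Suc (2 * K)) = 0" by (rule two_exp_odd) simp
  have e: "two_exp (2 * Suc K) = Suc (two_exp (Suc K))" by (rule two_exp_double) simp
  have "gsum (2 * Suc K) = gsum (Suc (Suc (2 * K)))" by simp
  also have "\<dots> = gsum (2 * K) + 2 ^ two_exp (Suc (2 * K)) + 2 ^ two_exp (Suc (Suc (2 * K)))"
    by (simp add: gsum_Suc)
  also have "Suc (Suc (2 * K)) = 2 * Suc K" by simp
  also have "gsum (2 * K) + 2 ^ two_exp (Suc (2 * K)) + 2 ^ two_exp (2 * Suc K) = Suc K + 2 * gsum (Suc K)"
    unfolding o e Suc.IH gsum_Suc by simp
  finally show ?case .
qed

lemma gsum_bound: "n \<ge> 1 \<Longrightarrow> real (gsum n) \<le> real n * (log 2 (real n) + 1)"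
proof (induction n rule: less_induct)
  case (less n)
  show ?case
  proof (cases "n = 1")
    case True
    have "gsum 1 = 1" using gsum_Suc[of 0] gsum_0 two_exp_odd[of 1] by simp
    then show ?thesis using True by simp
  next
    case False
    then have n2: "n \<ge> 2" using less.prems by simp
    obtain K where K: "n = 2 * K \<or> n = 2 * K + 1" by (metis oddE evenE)
    have K1: "K \<ge> 1" using K n2 by auto
    have evb: "real (gsum (2 * K)) \<le> real (2 * K) * (log 2 (real (2 * K)) + 1) - real K"
    proof -
      have IH: "real (gsum K) \<le> real K * (log 2 (real K) + 1)"
        using less.IH[of K] K K1 n2 by auto
      have l2: "log 2 (real (2 * K)) = log 2 (real K) + 1"
        using K1 by (simp add: log_mult)
      have "real (gsum (2 * K)) = real K + 2 * real (gsum K)" using gsum_double[of K] by simp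
      also have "\<dots> \<le> real K + 2 * (real K * (log 2 (real K) + 1))" using IH by simp
      also have "\<dots> = real (2 * K) * (log 2 (real (2 * K)) + 1) - real K" unfolding l2 by (simp add: algebra_simps)
      finally show ?thesis .
    qed
    show ?thesis
    proof (cases "n = 2 * K")
      case True
      then show ?thesis using evb K1 by simp
    next
      case False
      then have nK: "n = 2 * K + 1" using K by simp
      have lg: "log 2 (real (2 * K)) \<le> log 2 (real n)" using nK K1 by simp
      have lg0: "0 \<le> log 2 (real n)" using n2 by simp
      have "real (gsum n) = real (gsum (2 * K)) + 1"
        using nK gsum_Suc[of "2 * K"] two_exp_odd[of "Suc (2 * K)"] by simp
      also have "\<dots> \<le> real (2 * K) * (log 2 (real (2 * K)) + 1) - real K + 1" using evb by simp
      also have "\<dots> \<le> real (2 * K) * (log 2 (real n) + 1) + 1"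
      proof -
        have pm: "real (2 * K) * log 2 (real (2 * K)) \<le> real (2 * K) * log 2 (real n)"
          using lg by (intro mult_left_mono) auto
        have e1: "real (2 * K) * (log 2 (real (2 * K)) + 1) - real K + 1 = real (2 * K) * log 2 (real (2 * K)) + real (2 * K) - real K + 1"
          by (simp add: algebra_simps)
        have e2: "real (2 * K) * (log 2 (real n) + 1) + 1 = real (2 * K) * log 2 (real n) + real (2 * K) + 1"
          by (simp add: algebra_simps)
        show ?thesis unfolding e1 e2 using pm K1 by linarith
      qed
      also have "\<dots> \<le> real n * (log 2 (real n) + 1)"
        using nK lg0 by (simp add: algebra_simps)
      finally show ?thesis .
    qed
  qed
qed

definition Mr :: "nat \<Rightarrow> real" where
  "Mr n = 8 * real n ^ 2 + real n * (real n * (log 2 (real n) + 1))"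

lemma occ_bound_real:
  assumes n: "n \<ge> 4" and w: "length w = n - 3"
  shows "real (occ (Fc (Suc n)) w) \<le> Mr n"
proof -
  have "real (occ (Fc (Suc n)) w) \<le> real (8 * n * n + n * gsum n)"
    using occ_Fc_bound[OF n w] by linarith
  also have "\<dots> = 8 * real n ^ 2 + real n * real (gsum n)" by (simp add: power2_eq_square)
  also have "\<dots> \<le> Mr n" unfolding Mr_def using gsum_bound[of n] n by (intro add_left_mono mult_left_mono) auto
  finally show ?thesis .
qed

lemma asym: "\<forall>\<^sub>F n in sequentially. (Mr n + 2) ^ 2 \<le> real n ^ 5"
  unfolding Mr_def by real_asymp

lemma per_bit:
  assumes n: "n \<ge> 5" and A: "(Mr n + 2) ^ 2 \<le> real n ^ 5"
    and k: "Soff n \<le> k" "k < Soff n + 2 ^ n + 2 * n"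
  shows "ppm_cost (map Sseq [0..<k]) (Sseq k) \<le> log 2 (real n ^ 5)"
proof -
  let ?F = "Fc (Suc n)"
  have p4: "(4::nat) \<le> 2 ^ n"
  proof -
    have "(2::nat) ^ 2 \<le> 2 ^ n" using n by (intro power_increasing) auto
    then show ?thesis by simp
  qed
  have "2 * n \<le> (n - 1) * 4" using n by simp
  also have "\<dots> \<le> (n - 1) * 2 ^ n" using p4 by simp
  finally have a: "2 ^ n + 2 * n \<le> n * 2 ^ n" using n by (cases n) auto
  have lF: "length ?F = Soff n + n * 2 ^ n" using Fc_len_Suc[of n] n Soff_Fc by simp
  have kF: "k \<le> length ?F" using k a lF by linarith
  have x: "map Sseq [0..<k] = take k ?F" by (rule map_Sseq[OF kF])
  have H: "\<forall>w. length w = n - 2 \<longrightarrow> (\<exists>i. i + (n - 2) < length (take k ?F) \<and> take (n - 2) (drop i (take k ?F)) = w)"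
    by (rule H_lift[OF n k(1) kF])
  have j2: "n - 2 \<ge> 2" using n by simp
  have kx: "n - 3 \<le> length (take k ?F)"
  proof -
    have "Soff n \<ge> n - 1" unfolding Soff_Fc using Fc_len_ge[of "n - 1"] n by simp
    then show ?thesis using k kF by simp
  qed
  have Mb: "real (occ (take k ?F) (suffix_of_len (take k ?F) (n - 2 - 1))) \<le> Mr n"
  proof -
    let ?w = "suffix_of_len (take k ?F) (n - 3)"
    have lw: "length ?w = n - 3" using kx by (rule suffix_of_len_len)
    have "occ (take k ?F) ?w \<le> occ ?F ?w" by (rule occ_take_le)
    then have "real (occ (take k ?F) ?w) \<le> real (occ ?F ?w)" by simp
    also have "\<dots> \<le> Mr n" using occ_bound_real[of n ?w] n lw by simp
    finally show ?thesis by (simp add: numeral_3_eq_3)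
  qed
  have c: "ppm_cost (take k ?F) (Sseq k) \<le> 2 * log 2 (Mr n + 2)"
    by (rule ppm_cost_bound[OF j2 H Mb])
  have M0: "0 \<le> Mr n" unfolding Mr_def using n by simp
  have "2 * log 2 (Mr n + 2) = log 2 ((Mr n + 2) ^ 2)" using M0 by (simp add: log_nat_power)
  also have "\<dots> \<le> log 2 (real n ^ 5)" using A M0 n by (subst log_le_cancel_iff) auto
  finally show ?thesis using c x by simp
qed

theorem corollary1:
  shows "\<forall>\<^sub>F n in sequentially.
           (\<Sum>k \<in> {Soff n..<Soff n + 2 ^ n + 2 * n}. ppm_cost (map Sseq [0..<k]) (Sseq k))
             \<le> real (2 ^ n + 2 * n) * log 2 (real n ^ 5)"
proof -
  have ev5: "\<forall>\<^sub>F n in sequentially. n \<ge> (5::nat)" by (rule eventually_ge_at_top)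
  show ?thesis using ev5 asym
  proof eventually_elim
    case (elim n)
    have "(\<Sum>k \<in> {Soff n..<Soff n + 2 ^ n + 2 * n}. ppm_cost (map Sseq [0..<k]) (Sseq k))
        \<le> real (card {Soff n..<Soff n + 2 ^ n + 2 * n}) * log 2 (real n ^ 5)"
      by (rule sum_bounded_above) (use per_bit elim in auto)
    also have "card {Soff n..<Soff n + 2 ^ n + 2 * n} = 2 ^ n + 2 * n" by simp
    finally show ?case .
  qed
qed

end
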